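(* Let $H\in\mathbb{C}^{M\times M}$ and $\mathbf{z}\in\mathbb{C}^{M}$ be as defined in the context. Then $0$ is a simple eigenvalue of $H$ with a corresponding eigenvector $\mathbf{z}$ if and only if the localization interaction graph $\mathcal{G}'$ has an oriented spanning tree. Further, every nonzero eigenvalue of $H$ has strictly negative real part.
   Context: Setting. There are $N$ agents $\mathcal{V}=\{1,\dots,N\}$ at distinct positions $\mathbf{p}_u\in\mathbb{R}^2$. The bearing vector is $\mathbf{g}_{vu}=(\mathbf{p}_v-\mathbf{p}_u)/\|\mathbf{p}_v-\mathbf{p}_u\|$ and $\angle\mathbf{g}_{vu}\in[-\pi,\pi)$ its angle in a fixed global frame. For distinct agents $u,v,w$, $\alpha^{u}_{wv}\in[-\pi,\pi)$ denotes the counterclockwise angle at $u$ from $\mathbf{g}_{vu}$ to $\mathbf{g}_{wu}$. A set $\mathcal{S}$ of measured subtended angles is given, with $\alpha^{u}_{wv}\in\mathcal{S}$ iff $\alpha^{u}_{vw}\in\mathcal{S}$. Standing assumption: if an agent measures subtended angles between two or more pairs of other agents, all bearing vectors associated with these measurements are related to each other through them (so that the subtended angle at that agent between any two of these agents is determined by its measurements). The communication graph $\mathcal{G}=(\mathcal{V},\mathcal{E})$ has as edges exactly the ordered pairs $(u,v),(v,u),(u,w),(w,u)$ for all $\alpha^{u}_{wv}\in\mathcal{S}$; it is symmetric and assumed connected. Edge localization graph $\bar{\mathcal{G}}=(\bar{\mathcal{V}},\bar{\mathcal{E}})$: for each $(u,v)\in\mathcal{E}$ with no $w$ such that $\alpha^{v}_{wu}\in\mathcal{S}$,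 introduce a new virtual vertex $\bar v^{u}$ (distinct for distinct such pairs), co-located with agent $v$; $\bar{\mathcal{E}}$ is obtained from $\mathcal{E}$ by replacing each such pair $(u,v),(v,u)$ by $(u,\bar v^{u}),(\bar v^{u},u)$; $\bar{\mathcal{V}}$ consists of the agents that measure at least one subtended angle together with all virtual vertices. For $a\in\bar{\mathcal{V}}$ let $\rho(a)$ be the real agent it is (co-located with): $\rho(\bar v^u)=v$, $\rho(v)=v$. The directed line graph $L(\bar{\mathcal{G}})$ has vertex set $\bar{\mathcal{E}}$ and an edge $(e_1,e_2)$ whenever the head of $e_1$ equals the tail of $e_2$. The localization interaction graph $\mathcal{G}'=(\mathcal{V}',\mathcal{E}')$ is $L(\bar{\mathcal{G}})$ with vertices relabelled by a bijection onto $\mathcal{V}'=\{1,\dots,M\}$, $M=|\bar{\mathcal{E}}|$; vertex $k$ corresponding to $(a,b)\in\bar{\mathcal{E}}$ is the edge agent $k$; its neighbor set is $\mathcal{N}_k=\{j:(k,j)\in\mathcal{E}'\}$. For edge agent $k$ corresponding to $(a,b)$ set $\theta_k=\angle\mathbf{g}_{\rho(b)\rho(a)}$ and $z_k=e^{\mathrm{i}\theta_k}$, $\mathbf{z}=[z_1,\dots,z_M]^T$. For $j\in\mathcal{N}_k$ with $j$ corresponding to $(b,c)$, write $u=\rho(a)$, $v=\rho(b)$, $w=\rho(c)$ and set $\theta_{jk}=\mathrm{PV}(\alpha^{v}_{wu}+\pi)$ if $w\neq u$ and $\theta_{jk}=-\pi$ if $w=u$, where $\mathrm{PV}(\theta)=[(\theta+\pi)\bmod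 2\pi]-\pi$. The matrix $H$ has entries $[H]_{kk}=-|\mathcal{N}_k|$, $[H]_{kj}=e^{-\mathrm{i}\theta_{jk}}$ if $j\in\mathcal{N}_k$, and $0$ otherwise. An oriented spanning tree of a directed graph with root $r$ is an acyclic subgraph containing all vertices in which every vertex other than $r$ has a directed path to $r$. *)

theory Defs
  imports Complex_Main "Jordan_Normal_Form.Char_Poly"
begin

text \<open>Agents are natural numbers; positions in the plane are complex numbers
  (R^2 identified with C). A measured subtended angle alpha^u_{wv} in S is encoded by the
  triple (u, w, v) in the set S.\<close>

definition pv :: "real \<Rightarrow> real" where
  "pv \<theta> = ((\<theta> + pi) - 2 * pi * of_int \<lfloor>(\<theta> + pi) / (2 * pi)\<rfloor>) - pi"

text \<open>Angle (in [-pi,pi)) of the bearing vector g_{vu} = (p v - p u)/|p v - p u|.\<close>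
definition bearing_angle :: "(nat \<Rightarrow> complex) \<Rightarrow> nat \<Rightarrow> nat \<Rightarrow> real" where
  "bearing_angle p v u = pv (Arg ((p v - p u) / of_real (cmod (p v - p u))))"

text \<open>alpha^u_{wv}: counterclockwise angle at u from g_{vu} to g_{wu}, in [-pi,pi).\<close>
definition subt_angle :: "(nat \<Rightarrow> complex) \<Rightarrow> nat \<Rightarrow> nat \<Rightarrow> nat \<Rightarrow> real" where
  "subt_angle p u w v = pv (bearing_angle p w u - bearing_angle p v u)"

definition comm_edges :: "(nat \<times> nat \<times> nat) set \<Rightarrow> (nat \<times> nat) set" where
  "comm_edges S = {e. \<exists>u w v. (u, w, v) \<in> S \<and>
      (e = (u, v) \<or> e = (v, u) \<or> e = (u, w) \<or> e = (w, u))}"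

definition standing_assumption :: "(nat \<times> nat \<times> nat) set \<Rightarrow> bool" where
  "standing_assumption S \<longleftrightarrow> (\<forall>u v w v' w'. (u, w, v) \<in> S \<longrightarrow> (u, w', v') \<in> S \<longrightarrow>
      (v, v') \<in> {(x, y). (u, y, x) \<in> S}\<^sup>*)"

text \<open>Vertices of the edge localization graph: real agents or virtual vertices.
  Virt u v stands for the virtual vertex bar v^u, co-located with agent v.\<close>
datatype vbar = Real nat | Virt nat nat

fun rho :: "vbar \<Rightarrow> nat" where
  "rho (Real v) = v"
| "rho (Virt u v) = v"

definition needs_virtual :: "(nat \<times> nat \<times> nat) set \<Rightarrow> nat \<Rightarrow> nat \<Rightarrow> bool" where
  "needs_virtual S u v \<longleftrightarrow> (u, v) \<in> comm_edges S \<and> \<not> (\<exists>w. (v, w, u) \<in> S)"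

definition loc_edges :: "(nat \<times> nat \<times> nat) set \<Rightarrow> (vbar \<times> vbar) set" where
  "loc_edges S =
     {(Real u, Real v) | u v. (u, v) \<in> comm_edges S \<and>
         \<not> needs_virtual S u v \<and> \<not> needs_virtual S v u}
   \<union> {(Real u, Virt u v) | u v. needs_virtual S u v}
   \<union> {(Virt u v, Real u) | u v. needs_virtual S u v}"

text \<open>Localization interaction graph G' on {0..<M}, obtained from the directed line graph
  of the edge localization graph through the labelling lab : {0..<M} -> edges.\<close>
definition lig_edges :: "nat \<Rightarrow> (nat \<Rightarrow> vbar \<times> vbar) \<Rightarrow> (nat \<times> nat) set" where
  "lig_edges M lab = {(k, j). k < M \<and> j < M \<and> snd (lab k) = fst (lab j)}"

definition lig_nbrs :: "nat \<Rightarrow> (nat \<Rightarrow> vbar \<times> vbar) \<Rightarrow> nat \<Rightarrow> nat set" where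
  "lig_nbrs M lab k = {j. (k, j) \<in> lig_edges M lab}"

definition theta_e :: "(nat \<Rightarrow> complex) \<Rightarrow> (nat \<Rightarrow> vbar \<times> vbar) \<Rightarrow> nat \<Rightarrow> real" where
  "theta_e p lab k = bearing_angle p (rho (snd (lab k))) (rho (fst (lab k)))"

definition zvec :: "(nat \<Rightarrow> complex) \<Rightarrow> nat \<Rightarrow> (nat \<Rightarrow> vbar \<times> vbar) \<Rightarrow> complex vec" where
  "zvec p M lab = vec M (\<lambda>k. cis (theta_e p lab k))"

definition theta_jk :: "(nat \<Rightarrow> complex) \<Rightarrow> (nat \<Rightarrow> vbar \<times> vbar) \<Rightarrow> nat \<Rightarrow> nat \<Rightarrow> real" where
  "theta_jk p lab j k =
     (let u = rho (fst (lab k)); v = rho (snd (lab k)); w = rho (snd (lab j))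
      in if w \<noteq> u then pv (subt_angle p v w u + pi) else - pi)"

definition Hmat :: "(nat \<Rightarrow> complex) \<Rightarrow> nat \<Rightarrow> (nat \<Rightarrow> vbar \<times> vbar) \<Rightarrow> complex mat" where
  "Hmat p M lab = mat M M (\<lambda>(k, j).
      if k = j then - of_nat (card (lig_nbrs M lab k))
      else if j \<in> lig_nbrs M lab k then cis (- theta_jk p lab j k) else 0)"

definition has_oriented_spanning_tree :: "'a set \<Rightarrow> ('a \<times> 'a) set \<Rightarrow> bool" where
  "has_oriented_spanning_tree Vs Es \<longleftrightarrow>
     (\<exists>r \<in> Vs. \<exists>T \<subseteq> Es. acyclic T \<and> (\<forall>v \<in> Vs. v \<noteq> r \<longrightarrow> (v, r) \<in> T\<^sup>+))"

end

theory Submission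
  imports Defs "Jordan_Normal_Form.Jordan_Normal_Form_Uniqueness" "Jordan_Normal_Form.Jordan_Normal_Form_Existence"
begin

hide_const (open) Coset.order



lemma cis_pv: "cis (pv x) = cis x"
proof -
  have "pv x = x + 2 * pi * of_int (- \<lfloor>(x + pi) / (2 * pi)\<rfloor>)"
    unfolding pv_def by simp
  hence "cis (pv x) = cis x * cis (2 * pi * of_int (- \<lfloor>(x + pi) / (2 * pi)\<rfloor>))"
    by (simp add: cis_mult)
  also have "\<dots> = cis x" by (subst cis_multiple_2pi) auto
  finally show ?thesis .
qed

lemma cis_bearing: "p a \<noteq> p b \<Longrightarrow> cis (bearing_angle p a b) = sgn (p a - p b)"
  unfolding bearing_angle_def cis_pv
  by (subst cis_Arg) (auto simp: sgn_eq norm_divide)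

lemma angle_identity:
  assumes "p u \<noteq> p v" "p w \<noteq> p v"
  shows "cis (- (if w \<noteq> u then pv (subt_angle p v w u + pi) else - pi)) * cis (bearing_angle p w v)
         = cis (bearing_angle p v u)"
proof -
  have s: "sgn (p u - p v) = - sgn (p v - p u)"
    by (metis minus_diff_eq sgn_minus)
  show ?thesis
  proof (cases "w = u")
    case True
    then show ?thesis using assms s by (simp add: cis_bearing)
  next
    case False
    have "cis (- pv (subt_angle p v w u + pi)) = inverse (cis (subt_angle p v w u + pi))"
      by (metis cis_inverse cis_pv)
    also have "cis (subt_angle p v w u + pi) = - cis (subt_angle p v w u)"
      by (simp add: cis_mult[symmetric])
    also have "cis (subt_angle p v w u) = cis (bearing_angle p w v) / cis (bearing_angle p u v)"
      unfolding subt_angle_def cis_pv cis_divide ..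
    finally have "cis (- pv (subt_angle p v w u + pi)) * cis (bearing_angle p w v) = - cis (bearing_angle p u v)"
      by (simp add: field_simps)
    then show ?thesis using False assms s by (simp add: cis_bearing)
  qed
qed



definition lap :: "(nat \<Rightarrow> nat set) \<Rightarrow> (nat \<Rightarrow> 'a::ab_group_add) \<Rightarrow> nat \<Rightarrow> 'a" where
  "lap nb y k = (\<Sum>j\<in>nb k. y j - y k)"

lemma lap_max_root:
  fixes g :: "nat \<Rightarrow> real"
  assumes nbs: "\<And>k. k < M \<Longrightarrow> nb k \<subseteq> {..<M}" and lz: "\<And>k. k < M \<Longrightarrow> lap nb g k = 0"
    and r: "r < M" and reach: "\<And>v. v < M \<Longrightarrow> v \<noteq> r \<Longrightarrow> (v,r) \<in> {(a,b). b \<in> nb a}\<^sup>+"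
  shows "k < M \<Longrightarrow> g k \<le> g r"
proof -
  assume kM: "k < M"
  have fin: "finite (g ` {..<M})" "g ` {..<M} \<noteq> {}" using r by auto
  obtain k0 where k0: "k0 < M" "g k0 = Max (g ` {..<M})" using Max_in[OF fin] by auto
  have kmax: "\<And>j. j < M \<Longrightarrow> g j \<le> g k0" using k0 fin by simp
  have stp: "g j = g k0" if "i < M" "g i = g k0" "j \<in> nb i" for i j
  proof -
    have fi: "finite (nb i)" using nbs[OF that(1)] finite_subset by blast
    have "(\<Sum>j\<in>nb i. g k0 - g j) = - lap nb g i" using that(2) unfolding lap_def
      by (simp add: sum_negf[symmetric])
    hence "(\<Sum>j\<in>nb i. g k0 - g j) = 0" using lz[OF that(1)] by simp
    moreover have "\<forall>j\<in>nb i. 0 \<le> g k0 - g j" using kmax nbs[OF that(1)] by auto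
    ultimately have "\<forall>j\<in>nb i. g k0 - g j = 0" using sum_nonneg_eq_0_iff[OF fi, of "\<lambda>j. g k0 - g j"] by simp
    thus ?thesis using that(3) by auto
  qed
  have "g r = g k0"
  proof (cases "k0 = r")
    case False
    have "(k0, r) \<in> {(a,b). b \<in> nb a}\<^sup>+" using reach[OF k0(1) False] .
    hence "r < M \<and> g r = g k0"
    proof (induction rule: trancl_induct)
      case (base y) thus ?case using stp[OF k0(1) refl] nbs[OF k0(1)] by auto
    next
      case (step y z)
      hence "y < M" "g y = g k0" "z \<in> nb y" by auto
      thus ?case using stp[of y z] nbs[of y] by auto
    qed
    thus ?thesis by simp
  qed simp
  thus ?thesis using kmax[OF kM] by simp
qed

lemma lap_const:
  fixes g :: "nat \<Rightarrow> real"
  assumes nbs: "\<And>k. k < M \<Longrightarrow> nb k \<subseteq> {..<M}" and lz: "\<And>k. k < M \<Longrightarrow> lap nb g k = 0"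
    and r: "r < M" and reach: "\<And>v. v < M \<Longrightarrow> v \<noteq> r \<Longrightarrow> (v,r) \<in> {(a,b). b \<in> nb a}\<^sup>+"
    and k: "k < M"
  shows "g k = g r"
proof -
  have "lap nb (\<lambda>i. - g i) k = 0" if "k < M" for k
  proof -
    have "lap nb (\<lambda>i. - g i) k = - lap nb g k"
      unfolding lap_def by (subst sum_negf[symmetric]) simp
    thus ?thesis using lz[OF that] by simp
  qed
  from lap_max_root[of M nb "\<lambda>i. - g i", OF nbs this r reach k]
  have "g r \<le> g k" by simp
  moreover have "g k \<le> g r" using lap_max_root[OF nbs lz r reach k] .
  ultimately show ?thesis by simp
qed

lemma lap_c_zero:
  fixes f :: "nat \<Rightarrow> real"
  assumes nbs: "\<And>k. k < M \<Longrightarrow> nb k \<subseteq> {..<M}" and M: "0 < M"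
    and lc: "\<And>k. k < M \<Longrightarrow> lap nb f k = cc"
  shows "cc = 0"
proof -
  have fin: "finite (f ` {..<M})" "f ` {..<M} \<noteq> {}" using M by auto
  obtain k0 where k0: "k0 < M" "f k0 = Max (f ` {..<M})" using Max_in[OF fin] by auto
  obtain k1 where k1: "k1 < M" "f k1 = Min (f ` {..<M})" using Min_in[OF fin] by auto
  have "cc = (\<Sum>j\<in>nb k0. f j - f k0)" using lc[OF k0(1)] unfolding lap_def by simp
  also have "\<dots> \<le> 0" using nbs[OF k0(1)] k0 fin by (intro sum_nonpos) auto
  finally have 1: "cc \<le> 0" .
  have "cc = (\<Sum>j\<in>nb k1. f j - f k1)" using lc[OF k1(1)] unfolding lap_def by simp
  also have "\<dots> \<ge> 0" using nbs[OF k1(1)] k1 fin by (intro sum_nonneg) auto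
  finally show ?thesis using 1 by simp
qed

lemma Re_lap: "Re (lap nb y k) = lap nb (\<lambda>i. Re (y i)) k"
  unfolding lap_def by (simp add: Re_sum)
lemma Im_lap: "Im (lap nb y k) = lap nb (\<lambda>i. Im (y i)) k"
  unfolding lap_def by (simp add: Im_sum)

lemma lap_complex_const:
  fixes y :: "nat \<Rightarrow> complex"
  assumes nbs: "\<And>k. k < M \<Longrightarrow> nb k \<subseteq> {..<M}" and lz: "\<And>k. k < M \<Longrightarrow> lap nb y k = 0"
    and r: "r < M" and reach: "\<And>v. v < M \<Longrightarrow> v \<noteq> r \<Longrightarrow> (v,r) \<in> {(a,b). b \<in> nb a}\<^sup>+"
    and k: "k < M"
  shows "y k = y r"
proof -
  have "Re (y k) = Re (y r)"
  proof (rule lap_const[where g="\<lambda>i. Re (y i)", OF nbs _ r reach k])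
    fix i assume i: "i < M"
    show "lap nb (\<lambda>i. Re (y i)) i = 0" using Re_lap[of nb y i] lz[OF i] by (metis zero_complex.sel(1))
  qed
  moreover have "Im (y k) = Im (y r)"
  proof (rule lap_const[where g="\<lambda>i. Im (y i)", OF nbs _ r reach k])
    fix i assume i: "i < M"
    show "lap nb (\<lambda>i. Im (y i)) i = 0" using Im_lap[of nb y i] lz[OF i] by (metis zero_complex.sel(2))
  qed
  ultimately show ?thesis by (simp add: complex_eqI)
qed

lemma lap2_const:
  fixes y :: "nat \<Rightarrow> complex"
  assumes nbs: "\<And>k. k < M \<Longrightarrow> nb k \<subseteq> {..<M}" and lz: "\<And>k. k < M \<Longrightarrow> lap nb (lap nb y) k = 0"
    and r: "r < M" and reach: "\<And>v. v < M \<Longrightarrow> v \<noteq> r \<Longrightarrow> (v,r) \<in> {(a,b). b \<in> nb a}\<^sup>+"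
    and k: "k < M"
  shows "y k = y r"
proof -
  have gc: "lap nb y i = lap nb y r" if "i < M" for i
    by (rule lap_complex_const[OF nbs lz r reach that])
  have M: "0 < M" using r by simp
  have "Re (lap nb y r) = 0"
  proof (rule lap_c_zero[where f="\<lambda>i. Re (y i)", OF nbs M])
    fix i assume i: "i < M"
    show "lap nb (\<lambda>i. Re (y i)) i = Re (lap nb y r)" using Re_lap[of nb y i] gc[OF i] by metis
  qed
  moreover have "Im (lap nb y r) = 0"
  proof (rule lap_c_zero[where f="\<lambda>i. Im (y i)", OF nbs M])
    fix i assume i: "i < M"
    show "lap nb (\<lambda>i. Im (y i)) i = Im (lap nb y r)" using Im_lap[of nb y i] gc[OF i] by metis
  qed
  ultimately have "lap nb y r = 0" by (simp add: complex_eqI)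
  hence "lap nb y i = 0" if "i < M" for i using gc[OF that] by simp
  thus ?thesis using lap_complex_const[OF nbs _ r reach k] by blast
qed

locale maglap =
  fixes M :: nat and nb :: "nat \<Rightarrow> nat set" and c :: "nat \<Rightarrow> nat \<Rightarrow> complex"
    and zz :: "nat \<Rightarrow> complex" and Hm :: "complex mat"
  assumes Hm_def: "Hm = mat M M (\<lambda>(k,j). if k = j then - of_nat (card (nb k))
                         else if j \<in> nb k then c k j else 0)"
  and nb_sub: "k < M \<Longrightarrow> nb k \<subseteq> {..<M}"
  and nb_irr: "k < M \<Longrightarrow> k \<notin> nb k"
  and cz: "k < M \<Longrightarrow> j \<in> nb k \<Longrightarrow> c k j * zz j = zz k"
  and zu: "cmod (zz k) = 1"
begin

lemma Hm_carrier: "Hm \<in> carrier_mat M M" unfolding Hm_def by simp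

lemma Hm_idx: "k < M \<Longrightarrow> j < M \<Longrightarrow> Hm $$ (k,j) =
   (if k = j then - of_nat (card (nb k)) else if j \<in> nb k then c k j else 0)"
  unfolding Hm_def by simp

lemma fin_nb: "k < M \<Longrightarrow> finite (nb k)"
  using nb_sub finite_subset by blast

lemma zz_nz: "zz k \<noteq> 0" using zu[of k] by auto

lemma c_unit: "k < M \<Longrightarrow> j \<in> nb k \<Longrightarrow> cmod (c k j) = 1"
proof -
  assume a: "k < M" "j \<in> nb k"
  have "cmod (c k j) * cmod (zz j) = cmod (zz k)" using cz[OF a] by (metis norm_mult)
  thus ?thesis using zu by simp
qed

lemma sum_split:
  assumes k: "k < M"
  shows "(\<Sum>j<M. (if k = j then A else if j \<in> nb k then B j else 0) * (v j :: complex))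
        = A * v k + (\<Sum>j\<in>nb k. B j * v j)"
proof -
  have "(\<Sum>j<M. (if k = j then A else if j \<in> nb k then B j else 0) * v j)
      = (\<Sum>j<M. (if j = k then A * v k else 0)) + (\<Sum>j<M. (if j \<in> nb k then B j * v j else 0))"
    unfolding sum.distrib[symmetric] by (rule sum.cong) (use nb_irr[OF k] in auto)
  also have "(\<Sum>j<M. (if j = k then A * v k else 0)) = A * v k" using k by simp
  also have "(\<Sum>j<M. (if j \<in> nb k then B j * v j else 0)) = (\<Sum>j\<in>{..<M} \<inter> nb k. B j * v j)"
    by (simp add: sum.inter_restrict)
  also have "{..<M} \<inter> nb k = nb k" using nb_sub[OF k] by auto
  finally show ?thesis .
qed

lemma row_formula:
  assumes k: "k < M" and v: "v \<in> carrier_vec M"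
  shows "(Hm *\<^sub>v v) $ k = - of_nat (card (nb k)) * v $ k + (\<Sum>j\<in>nb k. c k j * v $ j)"
proof -
  have "(Hm *\<^sub>v v) $ k = (\<Sum>j<M. Hm $$ (k,j) * v $ j)"
    using k v Hm_carrier by (auto simp: mult_mat_vec_def scalar_prod_def lessThan_atLeast0 intro!: sum.cong)
  also have "\<dots> = (\<Sum>j<M. (if k = j then - of_nat (card (nb k)) else if j \<in> nb k then c k j else 0) * v $ j)"
    using k by (intro sum.cong) (auto simp: Hm_idx)
  also have "\<dots> = - of_nat (card (nb k)) * v $ k + (\<Sum>j\<in>nb k. c k j * v $ j)"
    by (rule sum_split[OF k])
  finally show ?thesis .
qed

lemma lap_formula:
  assumes k: "k < M"
  shows "(Hm *\<^sub>v vec M (\<lambda>i. zz i * y i)) $ k = zz k * lap nb y k"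
proof -
  have "(Hm *\<^sub>v vec M (\<lambda>i. zz i * y i)) $ k
     = - of_nat (card (nb k)) * (zz k * y k) + (\<Sum>j\<in>nb k. c k j * (zz j * y j))"
    using row_formula[OF k, of "vec M (\<lambda>i. zz i * y i)"] k nb_sub[OF k]
    by (auto intro!: sum.cong)
  also have "(\<Sum>j\<in>nb k. c k j * (zz j * y j)) = (\<Sum>j\<in>nb k. zz k * y j)"
    by (intro sum.cong) (auto simp: cz[OF k, symmetric] mult.assoc)
  also have "- of_nat (card (nb k)) * (zz k * y k) + (\<Sum>j\<in>nb k. zz k * y j) = zz k * lap nb y k"
    unfolding lap_def by (simp add: sum_subtractf sum_distrib_left algebra_simps)
  finally show ?thesis .
qed

lemma Hm_vec: "Hm *\<^sub>v vec M (\<lambda>i. zz i * y i) = vec M (\<lambda>k. zz k * lap nb y k)"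
  by (rule eq_vecI) (use Hm_carrier lap_formula in auto)

lemma re_neg_aux:
  fixes ev :: complex and n :: real
  assumes "cmod (ev + of_real n) \<le> n" "n \<ge> 0" "ev \<noteq> 0"
  shows "Re ev < 0"
proof (rule ccontr)
  assume "\<not> Re ev < 0"
  hence a: "Re ev \<ge> 0" by simp
  have "(cmod (ev + of_real n))^2 \<le> n^2" using assms(1) norm_ge_zero power_mono by blast
  hence "(Re ev + n)^2 + (Im ev)^2 \<le> n^2" by (simp add: cmod_power2)
  hence "Re ev * (Re ev + 2 * n) + (Im ev)^2 \<le> 0" by (simp add: power2_eq_square algebra_simps)
  moreover have "Re ev * (Re ev + 2 * n) \<ge> 0" using a assms(2) by simp
  moreover have "(Im ev)^2 \<ge> 0" by simp
  ultimately have "Re ev * (Re ev + 2 * n) = 0" "(Im ev)^2 = 0" by linarith+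
  hence "Re ev * (Re ev + 2 * n) = 0" "Im ev = 0" by auto
  hence "Re ev = 0" "Im ev = 0" using a assms(2) by auto
  thus False using assms(3) complex_eqI by auto
qed

lemma eig_neg:
  assumes ev: "eigenvector Hm v ev" and nz: "ev \<noteq> 0"
  shows "Re ev < 0"
proof -
  have dr: "dim_row Hm = M" using Hm_carrier by simp
  have v: "v \<in> carrier_vec M" and v0: "v \<noteq> 0\<^sub>v M" and Hv: "Hm *\<^sub>v v = ev \<cdot>\<^sub>v v"
    using ev unfolding eigenvector_def dr by auto
  obtain i where i: "i < M" "v $ i \<noteq> 0"
    using v v0 by (metis carrier_vecD eq_vecI index_zero_vec(1) index_zero_vec(2))
  define f where "f = (\<lambda>i. cmod (v $ i))"
  have fin: "finite (f ` {..<M})" "f ` {..<M} \<noteq> {}" using i by auto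
  obtain k where k: "k < M" "f k = Max (f ` {..<M})"
    using Max_in[OF fin] by auto
  have kmax: "\<And>j. j < M \<Longrightarrow> f j \<le> f k" using k fin by simp
  have fk: "f k > 0" using kmax[OF i(1)] i(2) unfolding f_def by (smt (verit) zero_less_norm_iff)
  have "ev * v $ k = - of_nat (card (nb k)) * v $ k + (\<Sum>j\<in>nb k. c k j * v $ j)"
    using row_formula[OF k(1) v] Hv k(1) by (metis index_smult_vec(1) v carrier_vecD)
  hence eq: "(ev + of_nat (card (nb k))) * v $ k = (\<Sum>j\<in>nb k. c k j * v $ j)"
    by (simp add: algebra_simps)
  have "cmod (ev + of_nat (card (nb k))) * f k = cmod (\<Sum>j\<in>nb k. c k j * v $ j)"
    using eq unfolding f_def by (metis norm_mult)
  also have "\<dots> \<le> (\<Sum>j\<in>nb k. cmod (c k j * v $ j))" by (rule norm_sum)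
  also have "\<dots> = (\<Sum>j\<in>nb k. f j)" unfolding f_def
    by (intro sum.cong) (auto simp: norm_mult c_unit[OF k(1)])
  also have "\<dots> \<le> (\<Sum>j\<in>nb k. f k)" using kmax nb_sub[OF k(1)] by (intro sum_mono) auto
  also have "\<dots> = of_nat (card (nb k)) * f k" by simp
  finally have "cmod (ev + of_nat (card (nb k))) \<le> of_nat (card (nb k))" using fk by simp
  thus ?thesis using re_neg_aux[of ev "of_nat (card (nb k))"] nz by simp
qed

lemma Hm_z: "Hm *\<^sub>v vec M zz = 0\<^sub>v M"
proof -
  have "Hm *\<^sub>v vec M zz = vec M (\<lambda>k. zz k * lap nb (\<lambda>_. 1::complex) k)"
    using Hm_vec[of "\<lambda>_. 1"] by simp
  also have "\<dots> = 0\<^sub>v M" unfolding lap_def by (rule eq_vecI) auto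
  finally show ?thesis .
qed

lemma mv_idx: "A \<in> carrier_mat M M \<Longrightarrow> v \<in> carrier_vec M \<Longrightarrow> k < M \<Longrightarrow>
   (A *\<^sub>v v) $ k = (\<Sum>j<M. A $$ (k,j) * v $ j)"
  by (auto simp: mult_mat_vec_def scalar_prod_def lessThan_atLeast0 intro!: sum.cong)

lemma closed_kernel_T:
  assumes C: "C \<subseteq> {..<M}" "C \<noteq> {}" and cl: "\<And>k. k \<in> C \<Longrightarrow> nb k \<subseteq> C"
  shows "\<exists>w. w \<in> mat_kernel (transpose_mat Hm) \<and> w \<noteq> 0\<^sub>v M \<and> (\<forall>j<M. j \<notin> C \<longrightarrow> w $ j = 0)"
proof -
  define B where "B = mat M M (\<lambda>(k,j). if k \<in> C then Hm $$ (k,j) else if k = j then 1 else (0::complex))"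
  define ind where "ind = (\<lambda>i. if i \<in> C then 1 else (0::complex))"
  define u where "u = vec M (\<lambda>i. zz i * ind i)"
  have Bc: "B \<in> carrier_mat M M" unfolding B_def by simp
  have uc: "u \<in> carrier_vec M" unfolding u_def by simp
  have HT: "transpose_mat Hm \<in> carrier_mat M M" using Hm_carrier by simp
  have Bu: "B *\<^sub>v u = 0\<^sub>v M"
  proof (rule eq_vecI)
    fix k assume "k < dim_vec (0\<^sub>v M :: complex vec)"
    hence k: "k < M" by simp
    show "(B *\<^sub>v u) $ k = 0\<^sub>v M $ k"
    proof (cases "k \<in> C")
      case True
      have "(B *\<^sub>v u) $ k = (\<Sum>j<M. B $$ (k,j) * u $ j)" by (rule mv_idx[OF Bc uc k])
      also have "\<dots> = (\<Sum>j<M. Hm $$ (k,j) * u $ j)" using True k unfolding B_def by (intro sum.cong) auto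
      also have "\<dots> = (Hm *\<^sub>v u) $ k" by (rule mv_idx[OF Hm_carrier uc k, symmetric])
      also have "\<dots> = zz k * lap nb ind k" unfolding u_def by (rule lap_formula[OF k])
      also have "lap nb ind k = 0" unfolding lap_def ind_def using cl[OF True] True
        by (intro sum.neutral) auto
      finally show ?thesis using k by simp
    next
      case False
      have "(B *\<^sub>v u) $ k = (\<Sum>j<M. B $$ (k,j) * u $ j)" by (rule mv_idx[OF Bc uc k])
      also have "\<dots> = (\<Sum>j<M. if j = k then u $ j else 0)" using False k unfolding B_def
        by (intro sum.cong) auto
      also have "\<dots> = u $ k" using k by simp
      finally show ?thesis using k False unfolding u_def ind_def by simp
    qed
  qed (use Bc in auto)
  obtain k0 where k0: "k0 \<in> C" using C by auto
  have "u $ k0 \<noteq> 0" using k0 C zz_nz unfolding u_def ind_def by auto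
  hence "u \<noteq> 0\<^sub>v M" using k0 C by auto
  hence "det B = 0" unfolding det_0_iff_vec_prod_zero[OF Bc] using Bu uc by (intro exI[of _ u]) simp
  hence "det (transpose_mat B) = 0" using det_transpose[OF Bc] by simp
  have BT: "transpose_mat B \<in> carrier_mat M M" using Bc by simp
  from \<open>det (transpose_mat B) = 0\<close>[unfolded det_0_iff_vec_prod_zero[OF BT]]
  obtain w where w: "w \<in> carrier_vec M" "w \<noteq> 0\<^sub>v M" "transpose_mat B *\<^sub>v w = 0\<^sub>v M"
    by blast
  have col: "(\<Sum>k<M. B $$ (k,j) * w $ k) = 0" if j: "j < M" for j
  proof -
    have "(transpose_mat B *\<^sub>v w) $ j = (\<Sum>k<M. transpose_mat B $$ (j,k) * w $ k)"
      by (rule mv_idx[OF BT w(1) j])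
    also have "\<dots> = (\<Sum>k<M. B $$ (k,j) * w $ k)" using j Bc by (intro sum.cong) auto
    finally show ?thesis using w(3) j by simp
  qed
  have wout: "w $ j = 0" if j: "j < M" "j \<notin> C" for j
  proof -
    have "(\<Sum>k<M. B $$ (k,j) * w $ k) = (\<Sum>k<M. if k = j then w $ k else 0)"
    proof (intro sum.cong refl)
      fix k assume "k \<in> {..<M}"
      hence k: "k < M" by simp
      show "B $$ (k,j) * w $ k = (if k = j then w $ k else 0)"
      proof (cases "k \<in> C")
        case True
        hence "k \<noteq> j" "j \<notin> nb k" using j cl by auto
        thus ?thesis using True k j unfolding B_def by (simp add: Hm_idx)
      qed (use k j in \<open>auto simp: B_def\<close>)
    qed
    also have "\<dots> = w $ j" using j by simp
    finally show ?thesis using col[OF j(1)] by simp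
  qed
  have "transpose_mat Hm *\<^sub>v w = 0\<^sub>v M"
  proof (rule eq_vecI)
    fix j assume "j < dim_vec (0\<^sub>v M :: complex vec)"
    hence j: "j < M" by simp
    have "(transpose_mat Hm *\<^sub>v w) $ j = (\<Sum>k<M. transpose_mat Hm $$ (j,k) * w $ k)"
      by (rule mv_idx[OF HT w(1) j])
    also have "\<dots> = (\<Sum>k<M. B $$ (k,j) * w $ k)"
    proof (intro sum.cong refl)
      fix k assume "k \<in> {..<M}"
      hence k: "k < M" by simp
      show "transpose_mat Hm $$ (j,k) * w $ k = B $$ (k,j) * w $ k"
        using k j wout[OF k] Hm_carrier unfolding B_def by (cases "k \<in> C") auto
    qed
    also have "\<dots> = 0" by (rule col[OF j])
    finally show "(transpose_mat Hm *\<^sub>v w) $ j = 0\<^sub>v M $ j" using j by simp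
  qed (use HT in simp)
  hence "w \<in> mat_kernel (transpose_mat Hm)" by (rule mat_kernelI[OF HT w(1)])
  thus ?thesis using w(2) wout by (intro exI[of _ w]) auto
qed

end


lemma tree_to_root:
  fixes R :: "(nat \<times> nat) set"
  assumes "has_oriented_spanning_tree {..<M} R"
  shows "\<exists>r<M. \<forall>v<M. v \<noteq> r \<longrightarrow> (v,r) \<in> R\<^sup>+"
  using assms unfolding has_oriented_spanning_tree_def
  by (metis lessThan_iff subsetD trancl_mono)

lemma root_to_tree:
  fixes R :: "(nat \<times> nat) set"
  assumes RM: "R \<subseteq> {..<M} \<times> {..<M}" and r: "r < M"
    and reach: "\<And>v. v < M \<Longrightarrow> v \<noteq> r \<Longrightarrow> (v,r) \<in> R\<^sup>+"
  shows "has_oriented_spanning_tree {..<M} R"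
proof -
  define d where "d v = (LEAST n. (v,r) \<in> R ^^ n)" for v
  define nxt where "nxt v = (SOME y. (v,y) \<in> R \<and> (y,r) \<in> R ^^ (d v - 1))" for v
  define T where "T = {(v, nxt v) | v. v < M \<and> v \<noteq> r}"
  have props: "(v, nxt v) \<in> R \<and> d (nxt v) < d v \<and> nxt v < M" if v: "v < M" "v \<noteq> r" for v
  proof -
    have "(v,r) \<in> R\<^sup>*" using reach[OF v] by auto
    then obtain n where "(v,r) \<in> R ^^ n" using rtrancl_power by blast
    hence dv: "(v,r) \<in> R ^^ (d v)" unfolding d_def by (rule LeastI)
    have "d v \<noteq> 0" using dv v(2) by (metis pair_in_Id_conv relpow.simps(1))
    then obtain m where m: "d v = Suc m" using not0_implies_Suc by blast
    then obtain y where "(v,y) \<in> R" "(y,r) \<in> R ^^ m" using dv relpow_Suc_D2 by metis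
    hence ex: "\<exists>y. (v,y) \<in> R \<and> (y,r) \<in> R ^^ (d v - 1)" using m by auto
    hence n1: "(v, nxt v) \<in> R" "(nxt v, r) \<in> R ^^ (d v - 1)"
      unfolding nxt_def by (metis (no_types, lifting) someI_ex)+
    have "d (nxt v) \<le> d v - 1" unfolding d_def using n1(2) Least_le by (metis d_def)
    thus ?thesis using n1(1) m RM by auto
  qed
  have TR: "T \<subseteq> R" unfolding T_def using props by auto
  have dec: "(a,b) \<in> T\<^sup>+ \<Longrightarrow> d b < d a" for a b
  proof (induction rule: trancl_induct)
    case (base y) thus ?case unfolding T_def using props by auto
  next
    case (step y z) thus ?case unfolding T_def using props by fastforce
  qed
  have acyc: "acyclic T" unfolding acyclic_def using dec by blast
  have reachT: "\<forall>v. v < M \<longrightarrow> d v = n \<longrightarrow> v \<noteq> r \<longrightarrow> (v,r) \<in> T\<^sup>+" for n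
  proof (induction n rule: less_induct)
    case (less n)
    show ?case
    proof (intro allI impI)
      fix v assume v: "v < M" "d v = n" "v \<noteq> r"
      have e: "(v, nxt v) \<in> T" unfolding T_def using v by auto
      show "(v,r) \<in> T\<^sup>+"
      proof (cases "nxt v = r")
        case True thus ?thesis using e by auto
      next
        case False
        have "(nxt v, r) \<in> T\<^sup>+" using less props[OF v(1) v(3)] v(2) False by blast
        thus ?thesis using e by (meson trancl_into_trancl2)
      qed
    qed
  qed
  show ?thesis unfolding has_oriented_spanning_tree_def
    using r TR acyc reachT by blast
qed

lemma no_root_two_closed:
  fixes R :: "(nat \<times> nat) set"
  assumes RM: "R \<subseteq> {..<M} \<times> {..<M}" and M: "0 < M"
    and nr: "\<not> (\<exists>r<M. \<forall>v<M. v \<noteq> r \<longrightarrow> (v,r) \<in> R\<^sup>+)"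
  shows "\<exists>C1 C2. C1 \<subseteq> {..<M} \<and> C2 \<subseteq> {..<M} \<and> C1 \<noteq> {} \<and> C2 \<noteq> {} \<and> C1 \<inter> C2 = {}
     \<and> (\<forall>k\<in>C1. \<forall>j. (k,j) \<in> R \<longrightarrow> j \<in> C1) \<and> (\<forall>k\<in>C2. \<forall>j. (k,j) \<in> R \<longrightarrow> j \<in> C2)"
proof -
  define Rs where "Rs v = R\<^sup>* `` {v}" for v
  have Rs_sub: "Rs v \<subseteq> {..<M}" if "v < M" for v
  proof
    fix x assume "x \<in> Rs v"
    hence "(v,x) \<in> R\<^sup>*" unfolding Rs_def by auto
    thus "x \<in> {..<M}"
    proof (cases rule: rtranclE)
      case base thus ?thesis using that by simp
    next
      case (step y) thus ?thesis using RM by auto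
    qed
  qed
  have Rs_cl: "\<forall>k\<in>Rs v. \<forall>j. (k,j) \<in> R \<longrightarrow> j \<in> Rs v" for v
    unfolding Rs_def by (auto intro: rtrancl_into_rtrancl)
  have Rs_self: "v \<in> Rs v" for v unfolding Rs_def by auto
  obtain v0 where v0: "v0 < M" "\<And>y. y < M \<Longrightarrow> card (Rs v0) \<le> card (Rs y)"
    using ex_has_least_nat[of "\<lambda>v. v < M" 0 "\<lambda>v. card (Rs v)"] M by blast
  obtain v where v: "v < M" "v \<noteq> v0" "(v,v0) \<notin> R\<^sup>+" using nr v0(1) by blast
  have vv0: "(v,v0) \<notin> R\<^sup>*" using v by (meson rtranclD)
  have disj: "Rs v0 \<inter> Rs v = {}"
  proof (rule ccontr)
    assume "Rs v0 \<inter> Rs v \<noteq> {}"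
    then obtain c where c: "c \<in> Rs v0" "c \<in> Rs v" by auto
    have cM: "c < M" using c Rs_sub[OF v0(1)] by auto
    have c1: "(v0, c) \<in> R\<^sup>*" "(v, c) \<in> R\<^sup>*" using c unfolding Rs_def by auto
    have sub: "Rs c \<subseteq> Rs v0"
    proof
      fix x assume "x \<in> Rs c"
      hence "(c, x) \<in> R\<^sup>*" unfolding Rs_def by simp
      hence "(v0, x) \<in> R\<^sup>*" using c1(1) by (rule rtrancl_trans[rotated])
      thus "x \<in> Rs v0" unfolding Rs_def by simp
    qed
    have fin: "finite (Rs v0)" by (rule finite_subset[OF Rs_sub[OF v0(1)] finite_lessThan])
    have "card (Rs c) \<le> card (Rs v0)" by (rule card_mono[OF fin sub])
    hence "card (Rs c) = card (Rs v0)" using v0(2)[OF cM] by simp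
    hence "Rs c = Rs v0" using card_subset_eq[OF fin sub] by simp
    hence "v0 \<in> Rs c" using Rs_self by auto
    hence "(c, v0) \<in> R\<^sup>*" unfolding Rs_def by simp
    hence "(v, v0) \<in> R\<^sup>*" using c1(2) by (rule rtrancl_trans[rotated])
    thus False using vv0 by simp
  qed
  have ne: "Rs v0 \<noteq> {}" "Rs v \<noteq> {}" using Rs_self by auto
  show ?thesis
    apply (rule exI[of _ "Rs v0"])
    apply (rule exI[of _ "Rs v"])
    using Rs_sub[OF v0(1)] Rs_sub[OF v(1)] disj Rs_cl[of v0] Rs_cl[of v] ne by simp
qed



lemma jnf_lists:
  fixes A :: "complex mat" assumes A: "A \<in> carrier_mat n n"
  shows "\<exists>ns. order 0 (char_poly A) = sum_list ns \<and> (\<forall>k. dim_gen_eigenspace A 0 k = sum_list (map (min k) ns))"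
proof -
  obtain as where "char_poly A = (\<Prod>a\<leftarrow>as. [:- a, 1:])" using char_poly_factorized[OF A] by blast
  from jordan_nf_exists[OF A this] obtain n_as where jnf: "jordan_nf A n_as" ..
  define ns where "ns = map fst (filter (\<lambda>na. snd na = 0) n_as)"
  have "order 0 (char_poly A) = sum_list ns" unfolding ns_def by (rule jordan_nf_order[OF jnf])
  moreover have "dim_gen_eigenspace A 0 k = sum_list (map (min k) ns)" for k
  proof -
    have "[(n, e)\<leftarrow>n_as . e = 0] = filter (\<lambda>na. snd na = 0) n_as"
      by (induction n_as) auto
    thus ?thesis unfolding dim_gen_eigenspace[OF jnf] ns_def by (simp add: o_def)
  qed
  ultimately show ?thesis by blast
qed

lemma order_one_of_dims:
  fixes ns :: "nat list"
  assumes "sum_list (map (min 2) ns) \<le> 1" "sum_list ns \<ge> 1"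
  shows "sum_list ns = 1"
proof -
  have "sum_list (map (min 2) ns) \<le> 1 \<Longrightarrow> sum_list ns = sum_list (map (min 2) ns)"
    by (induction ns) auto
  thus ?thesis using assms by simp
qed

lemma dims_of_order_one:
  fixes ns :: "nat list"
  shows "sum_list (map (min 1) ns) \<le> sum_list ns"
  by (induction ns) auto

lemma char0_pow:
  assumes A: "A \<in> carrier_mat n n"
  shows "char_matrix A 0 ^\<^sub>m 1 = A" "char_matrix A 0 ^\<^sub>m 2 = A * A"
proof -
  have c: "char_matrix A 0 = A" unfolding char_matrix_def using A by auto
  show "char_matrix A 0 ^\<^sub>m 1 = A" unfolding c using A by simp
  show "char_matrix A 0 ^\<^sub>m 2 = A * A" unfolding c using A by (simp add: numeral_2_eq_2)
qed

lemma dim_le1: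
  fixes A :: "complex mat"
  assumes A: "A \<in> carrier_mat n n" and z: "z \<in> mat_kernel A"
    and all: "\<And>x. x \<in> mat_kernel A \<Longrightarrow> \<exists>c. x = c \<cdot>\<^sub>v z"
  shows "kernel_dim A \<le> 1"
proof -
  interpret K: kernel n n A by (unfold_locales, rule A)
  have zc: "z \<in> carrier_vec n" using z mat_kernel_carrier A by blast
  have "K.Ker.span {z} = K.NC.span {z}" using z by (intro K.span_same) auto
  have gen: "K.Ker.span {z} = mat_kernel A"
  proof (rule equalityI)
    show "K.Ker.span {z} \<subseteq> mat_kernel A" using z K.Ker.span_is_subset2[of "{z}"] by auto
    show "mat_kernel A \<subseteq> K.Ker.span {z}"
    proof
      fix x assume x: "x \<in> mat_kernel A"
      then obtain c where xc: "x = c \<cdot>\<^sub>v z" using all by blast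
      have "z \<in> K.NC.span {z}" using zc by (intro K.NC.span_self) simp
      hence "c \<cdot>\<^sub>v z \<in> K.NC.span {z}" using zc by (intro K.NC.smult_in_span) auto
      thus "x \<in> K.Ker.span {z}" using xc \<open>K.Ker.span {z} = K.NC.span {z}\<close> by simp
    qed
  qed
  have "card {z} \<ge> K.Ker.dim" by (rule K.Ker.gen_ge_dim) (use z gen in auto)
  thus ?thesis unfolding K.kernel_dim by simp
qed

lemma dim_ge2:
  fixes A :: "complex mat"
  assumes A: "A \<in> carrier_mat n n" and w: "w1 \<in> mat_kernel A" "w2 \<in> mat_kernel A"
    and i: "i1 < n" "i2 < n" "w1 $ i1 \<noteq> 0" "w2 $ i1 = 0" "w2 $ i2 \<noteq> 0" "w1 $ i2 = 0"
  shows "kernel_dim A \<ge> 2"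
proof -
  interpret K: kernel n n A by (unfold_locales, rule A)
  have wc: "w1 \<in> carrier_vec n" "w2 \<in> carrier_vec n" using w mat_kernel_carrier A by blast+
  have ne: "w1 \<noteq> w2" using i by auto
  have li: "\<not> K.NC.lin_dep {w1, w2}"
  proof
    assume "K.NC.lin_dep {w1, w2}"
    then obtain U a u where U: "finite U" "U \<subseteq> {w1, w2}" "K.NC.lincomb a U = 0\<^sub>v n" "u \<in> U" "a u \<noteq> 0"
      unfolding K.NC.lin_dep_def by auto
    have Uc: "U \<subseteq> carrier_vec n" using U(2) wc by auto
    have "\<And>j. j < n \<Longrightarrow> (\<Sum>x\<in>U. a x * x $ j) = 0"
      using U(3) K.NC.lincomb_index[OF _ Uc] by (metis index_zero_vec(1))
    from this[OF i(1)] this[OF i(2)]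
    have s1: "(\<Sum>x\<in>U. a x * x $ i1) = 0" and s2: "(\<Sum>x\<in>U. a x * x $ i2) = 0" .
    show False
    proof (cases "u = w1")
      case True
      have "(\<Sum>x\<in>U. a x * x $ i1) = a w1 * w1 $ i1"
      proof (cases "w2 \<in> U")
        case True
        hence "U = {w1, w2}" using U(2) U(4) \<open>u = w1\<close> by auto
        thus ?thesis using ne i by simp
      next
        case False
        hence "U = {w1}" using U(2) U(4) \<open>u = w1\<close> by auto
        thus ?thesis by simp
      qed
      thus False using s1 i U(5) True by simp
    next
      case False
      hence uw2: "u = w2" using U by auto
      have "(\<Sum>x\<in>U. a x * x $ i2) = a w2 * w2 $ i2"
      proof (cases "w1 \<in> U")
        case True
        hence "U = {w1, w2}" using U(2) U(4) uw2 by auto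
        thus ?thesis using ne i by simp
      next
        case False
        hence "U = {w2}" using U(2) U(4) uw2 by auto
        thus ?thesis by simp
      qed
      thus False using s2 i U(5) uw2 by simp
    qed
  qed
  have sub: "{w1, w2} \<subseteq> mat_kernel A" using w by auto
  have li2: "\<not> K.Ker.lin_dep {w1, w2}" using li K.lindep_same[OF sub] by simp
  obtain B where B: "finite B" "K.Ker.basis B" using kernel_basis_exists[OF A] by blast
  have fd: "K.Ker.fin_dim" using B unfolding K.Ker.fin_dim_def K.Ker.basis_def by blast
  have "card {w1, w2} \<le> K.Ker.dim" using K.Ker.li_le_dim(2)[OF fd sub li2] .
  thus ?thesis using ne unfolding K.kernel_dim by simp
qed


lemma comm_edge_facts:
  assumes S_agents: "\<forall>(u, w, v) \<in> S. u \<in> {1..N} \<and> w \<in> {1..N} \<and> v \<in> {1..N}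
                       \<and> u \<noteq> w \<and> u \<noteq> v \<and> w \<noteq> v"
    and e: "(x, y) \<in> comm_edges S"
  shows "x \<in> {1..N} \<and> y \<in> {1..N} \<and> x \<noteq> y"
  using e S_agents unfolding comm_edges_def by fastforce

lemma loc_edge_facts:
  assumes S_agents: "\<forall>(u, w, v) \<in> S. u \<in> {1..N} \<and> w \<in> {1..N} \<and> v \<in> {1..N}
                       \<and> u \<noteq> w \<and> u \<noteq> v \<and> w \<noteq> v"
    and e: "e \<in> loc_edges S"
  shows "fst e \<noteq> snd e \<and> rho (fst e) \<in> {1..N} \<and> rho (snd e) \<in> {1..N} \<and> rho (fst e) \<noteq> rho (snd e)"
  using e unfolding loc_edges_def needs_virtual_def by (auto dest!: comm_edge_facts[OF S_agents])

theorem theorem2: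
  fixes N M :: nat and p :: "nat \<Rightarrow> complex" and S :: "(nat \<times> nat \<times> nat) set"
    and lab :: "nat \<Rightarrow> vbar \<times> vbar"
  assumes distinct_pos: "inj_on p {1..N}"
    and S_agents: "\<forall>(u, w, v) \<in> S. u \<in> {1..N} \<and> w \<in> {1..N} \<and> v \<in> {1..N}
                       \<and> u \<noteq> w \<and> u \<noteq> v \<and> w \<noteq> v"
    and S_sym: "\<forall>u w v. (u, w, v) \<in> S \<longleftrightarrow> (u, v, w) \<in> S"
    and standing: "standing_assumption S"
    and connected: "\<forall>x \<in> {1..N}. \<forall>y \<in> {1..N}. (x, y) \<in> (comm_edges S)\<^sup>*"
    and M_def: "M = card (loc_edges S)"
    and lab_bij: "bij_betw lab {..<M} (loc_edges S)"
  shows "((eigenvector (Hmat p M lab) (zvec p M lab) 0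
            \<and> order 0 (char_poly (Hmat p M lab)) = 1)
          \<longleftrightarrow> has_oriented_spanning_tree {..<M} (lig_edges M lab))
       \<and> (\<forall>ev. eigenvalue (Hmat p M lab) ev \<and> ev \<noteq> 0 \<longrightarrow> Re ev < 0)"
proof -
  define H where "H = Hmat p M lab"
  define R where "R = lig_edges M lab"
  define nbs where "nbs = lig_nbrs M lab"
  define zf where "zf = (\<lambda>k. cis (theta_e p lab k))"
  define cc where "cc = (\<lambda>k j. cis (- theta_jk p lab j k))"
  have labE: "k < M \<Longrightarrow> lab k \<in> loc_edges S" for k using lab_bij unfolding bij_betw_def by auto
  have zdef: "zvec p M lab = vec M zf" unfolding zvec_def zf_def ..
  have RM: "R \<subseteq> {..<M} \<times> {..<M}" unfolding R_def lig_edges_def by auto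
  have Rnb: "{(a,b). b \<in> nbs a} = R" unfolding R_def nbs_def lig_nbrs_def by auto
  interpret L: maglap M nbs cc zf H
  proof
    show "H = mat M M (\<lambda>(k,j). if k = j then - of_nat (card (nbs k)) else if j \<in> nbs k then cc k j else 0)"
      unfolding H_def Hmat_def nbs_def cc_def ..
    show "k < M \<Longrightarrow> nbs k \<subseteq> {..<M}" for k unfolding nbs_def lig_nbrs_def lig_edges_def by auto
    show "k \<notin> nbs k" if k: "k < M" for k
      using loc_edge_facts[OF S_agents labE[OF k]] unfolding nbs_def lig_nbrs_def lig_edges_def by auto
    show "cmod (zf k) = 1" for k unfolding zf_def by simp
    show "cc k j * zf j = zf k" if k: "k < M" and j: "j \<in> nbs k" for k j
    proof -
      have jM: "j < M" and sf: "snd (lab k) = fst (lab j)"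
        using j unfolding nbs_def lig_nbrs_def lig_edges_def by auto
      define u where "u = rho (fst (lab k))"
      define v where "v = rho (snd (lab k))"
      define w where "w = rho (snd (lab j))"
      have fk: "u \<in> {1..N}" "v \<in> {1..N}" "u \<noteq> v"
        using loc_edge_facts[OF S_agents labE[OF k]] unfolding u_def v_def by auto
      have fj: "w \<in> {1..N}" "v \<noteq> w"
        using loc_edge_facts[OF S_agents labE[OF jM]] sf unfolding w_def v_def by auto
      have p1: "p u \<noteq> p v" using fk distinct_pos by (meson inj_onD)
      have p2: "p w \<noteq> p v" using fk fj distinct_pos by (metis inj_onD)
      have tj: "theta_jk p lab j k = (if w \<noteq> u then pv (subt_angle p v w u + pi) else - pi)"
        unfolding theta_jk_def u_def v_def w_def Let_def ..
      have ej: "theta_e p lab j = bearing_angle p w v" unfolding theta_e_def w_def v_def sf ..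
      have ek: "theta_e p lab k = bearing_angle p v u" unfolding theta_e_def u_def v_def ..
      show ?thesis unfolding cc_def zf_def tj ej ek by (rule angle_identity[OF p1 p2])
    qed
  qed
  have Hc: "H \<in> carrier_mat M M" by (rule L.Hm_carrier)
  have part2: "\<forall>ev. eigenvalue H ev \<and> ev \<noteq> 0 \<longrightarrow> Re ev < 0"
    unfolding eigenvalue_def using L.eig_neg by blast
  have zc: "vec M zf \<in> carrier_vec M" by simp
  have Hz: "H *\<^sub>v vec M zf = 0\<^sub>v M" by (rule L.Hm_z)
  have eig_iff: "eigenvector H (vec M zf) 0 \<longleftrightarrow> 0 < M"
  proof
    assume "eigenvector H (vec M zf) 0"
    hence "vec M zf \<noteq> 0\<^sub>v M" unfolding eigenvector_def using Hc by auto
    thus "0 < M" by (metis eq_vecI dim_vec gr0I index_zero_vec(2) less_nat_zero_code)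
  next
    assume M0: "0 < M"
    have "vec M zf $ 0 \<noteq> 0\<^sub>v M $ 0" using M0 L.zz_nz by simp
    hence "vec M zf \<noteq> 0\<^sub>v M" by metis
    moreover have "H *\<^sub>v vec M zf = 0 \<cdot>\<^sub>v vec M zf" using Hz by auto
    ultimately show "eigenvector H (vec M zf) 0" unfolding eigenvector_def using Hc by simp
  qed
  have part1: "(eigenvector H (vec M zf) 0 \<and> order 0 (char_poly H) = 1)
      \<longleftrightarrow> has_oriented_spanning_tree {..<M} R"
  proof
    assume tree: "has_oriented_spanning_tree {..<M} R"
    obtain r where r: "r < M" and reach: "\<And>v. v < M \<Longrightarrow> v \<noteq> r \<Longrightarrow> (v,r) \<in> R\<^sup>+"
      using tree_to_root[OF tree] by blast
    have M0: "0 < M" using r by simp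
    have ev: "eigenvector H (vec M zf) 0" using eig_iff M0 by simp
    obtain ns where ns: "order 0 (char_poly H) = sum_list ns"
      "\<And>k. dim_gen_eigenspace H 0 k = sum_list (map (min k) ns)"
      using jnf_lists[OF Hc] by blast
    have HH: "H * H \<in> carrier_mat M M" using Hc by simp
    have H0: "H *\<^sub>v 0\<^sub>v M = 0\<^sub>v M"
      by (intro eq_vecI) (use Hc in \<open>auto simp: mult_mat_vec_def scalar_prod_def\<close>)
    have zk: "vec M zf \<in> mat_kernel (H * H)"
      by (rule mat_kernelI[OF HH zc]) (simp add: assoc_mult_mat_vec[OF Hc Hc zc] Hz H0)
    have allk: "\<exists>c. x = c \<cdot>\<^sub>v vec M zf" if x: "x \<in> mat_kernel (H * H)" for x
    proof -
      have xc: "x \<in> carrier_vec M" and xk: "(H * H) *\<^sub>v x = 0\<^sub>v M"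
        using mat_kernelD[OF HH x] mat_kernel_carrier[of "H * H"] x HH by auto
      define y where "y = (\<lambda>i. cnj (zf i) * x $ i)"
      have zz1: "zf i * cnj (zf i) = 1" for i
        using complex_norm_square[of "zf i"] L.zu[of i] by simp
      have xy: "x = vec M (\<lambda>i. zf i * y i)"
        using xc unfolding y_def by (intro eq_vecI) (auto simp: mult.assoc[symmetric] zz1)
      have "(H * H) *\<^sub>v x = H *\<^sub>v (H *\<^sub>v x)" by (rule assoc_mult_mat_vec[OF Hc Hc xc])
      also have "H *\<^sub>v x = vec M (\<lambda>k. zf k * lap nbs y k)" unfolding xy by (rule L.Hm_vec)
      also have "H *\<^sub>v \<dots> = vec M (\<lambda>k. zf k * lap nbs (lap nbs y) k)" by (rule L.Hm_vec)
      finally have v0: "vec M (\<lambda>k. zf k * lap nbs (lap nbs y) k) = 0\<^sub>v M" using xk by simp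
      have l2: "lap nbs (lap nbs y) k = 0" if "k < M" for k
      proof -
        have "vec M (\<lambda>k. zf k * lap nbs (lap nbs y) k) $ k = 0\<^sub>v M $ k" using v0 by simp
        hence "zf k * lap nbs (lap nbs y) k = 0" using that by simp
        thus ?thesis using L.zz_nz[of k] by simp
      qed
      have yc: "y k = y r" if "k < M" for k
        by (rule lap2_const[OF L.nb_sub l2 r _ that]) (use reach Rnb in auto)
      have "x = y r \<cdot>\<^sub>v vec M zf" unfolding xy by (intro eq_vecI) (auto simp: yc)
      thus ?thesis by blast
    qed
    have "kernel_dim (H * H) \<le> 1" by (rule dim_le1[OF HH zk allk])
    hence d2: "sum_list (map (min 2) ns) \<le> 1"
      using ns(2)[of 2] unfolding dim_gen_eigenspace_def char0_pow[OF Hc] by simp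
    have "eigenvalue H 0" using ev unfolding eigenvalue_def by blast
    hence "poly (char_poly H) 0 = 0" using eigenvalue_root_char_poly[OF Hc] by simp
    moreover have "char_poly H \<noteq> 0" using degree_monic_char_poly[OF Hc] by auto
    ultimately have "order 0 (char_poly H) \<noteq> 0" using order_root by blast
    hence "sum_list ns \<noteq> 0" using ns(1) by simp
    hence "sum_list ns \<ge> 1" by linarith
    hence "order 0 (char_poly H) = 1" using order_one_of_dims[OF d2] ns(1) by simp
    thus "eigenvector H (vec M zf) 0 \<and> order 0 (char_poly H) = 1" using ev by simp
  next
    assume a: "eigenvector H (vec M zf) 0 \<and> order 0 (char_poly H) = 1"
    have M0: "0 < M" using a eig_iff by simp
    show "has_oriented_spanning_tree {..<M} R"
    proof (rule ccontr)
      assume nt: "\<not> has_oriented_spanning_tree {..<M} R"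
      have nr: "\<not> (\<exists>r<M. \<forall>v<M. v \<noteq> r \<longrightarrow> (v,r) \<in> R\<^sup>+)"
        using root_to_tree[OF RM] nt by blast
      obtain C1 C2 where C: "C1 \<subseteq> {..<M}" "C2 \<subseteq> {..<M}" "C1 \<noteq> {}" "C2 \<noteq> {}" "C1 \<inter> C2 = {}"
        "\<forall>k\<in>C1. \<forall>j. (k,j) \<in> R \<longrightarrow> j \<in> C1" "\<forall>k\<in>C2. \<forall>j. (k,j) \<in> R \<longrightarrow> j \<in> C2"
        using no_root_two_closed[OF RM M0 nr] by blast
      have cl1: "\<And>k. k \<in> C1 \<Longrightarrow> nbs k \<subseteq> C1" using C(6) Rnb by blast
      have cl2: "\<And>k. k \<in> C2 \<Longrightarrow> nbs k \<subseteq> C2" using C(7) Rnb by blast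
      obtain w1 where w1: "w1 \<in> mat_kernel (transpose_mat H)" "w1 \<noteq> 0\<^sub>v M" "\<forall>j<M. j \<notin> C1 \<longrightarrow> w1 $ j = 0"
        using L.closed_kernel_T[OF C(1) C(3) cl1] by blast
      obtain w2 where w2: "w2 \<in> mat_kernel (transpose_mat H)" "w2 \<noteq> 0\<^sub>v M" "\<forall>j<M. j \<notin> C2 \<longrightarrow> w2 $ j = 0"
        using L.closed_kernel_T[OF C(2) C(4) cl2] by blast
      have HT: "transpose_mat H \<in> carrier_mat M M" using Hc by simp
      have w1c: "w1 \<in> carrier_vec M" using w1(1) mat_kernel_carrier HT by blast
      have w2c: "w2 \<in> carrier_vec M" using w2(1) mat_kernel_carrier HT by blast
      obtain i1 where i1: "i1 < M" "w1 $ i1 \<noteq> 0"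
        using w1c w1(2) by (metis carrier_vecD eq_vecI index_zero_vec(1) index_zero_vec(2))
      obtain i2 where i2: "i2 < M" "w2 $ i2 \<noteq> 0"
        using w2c w2(2) by (metis carrier_vecD eq_vecI index_zero_vec(1) index_zero_vec(2))
      have "i1 \<in> C1" using i1 w1(3) by blast
      hence "i1 \<notin> C2" using C(5) by blast
      hence z21: "w2 $ i1 = 0" using w2(3) i1(1) by blast
      have "i2 \<in> C2" using i2 w2(3) by blast
      hence "i2 \<notin> C1" using C(5) by blast
      hence z12: "w1 $ i2 = 0" using w1(3) i2(1) by blast
      have ge2: "kernel_dim (transpose_mat H) \<ge> 2"
        by (rule dim_ge2[OF HT w1(1) w2(1) i1(1) i2(1) i1(2) z21 i2(2) z12])
      obtain ns where ns: "order 0 (char_poly (transpose_mat H)) = sum_list ns"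
        "\<And>k. dim_gen_eigenspace (transpose_mat H) 0 k = sum_list (map (min k) ns)"
        using jnf_lists[OF HT] by blast
      have "sum_list ns = 1" using ns(1) a char_poly_transpose_mat[OF Hc] by simp
      hence "sum_list (map (min 1) ns) \<le> 1" using dims_of_order_one[of ns] by simp
      hence "kernel_dim (transpose_mat H) \<le> 1"
        using ns(2)[of 1] unfolding dim_gen_eigenspace_def char0_pow[OF HT] by simp
      thus False using ge2 by simp
    qed
  qed
  show ?thesis using part1 part2 unfolding H_def R_def zdef by simp
qed

end
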